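(* Let $w=w_1\cdots w_n$ be a word of distinct positive integers avoiding the patterns $3124$ and $3214$. Let $x$ be the position of the maximum letter of $w$, and let $i_1<i_2<\dots<i_k$ ($k\ge0$) be all indices $i<x$ with $w_i>w_{i+1}$ (so that $w_1\cdots w_x$ is the concatenation of the ascending runs $w_1\cdots w_{i_1}$, $w_{i_1+1}\cdots w_{i_2}$, $\dots$, $w_{i_k+1}\cdots w_x$). Then: (1) $\mathrm{Lrmax}(w)=\{w_j: 1\le j\le x,\ j\notin\{i_1+1,i_2+1,\dots,i_k+1\}\}$; in particular $w_{i_1}<w_{i_2}<\dots<w_{i_k}<w_x$. (2) There are indices $x\le c_k\le c_{k-1}\le\dots\le c_1\le c_0=n$ such that every letter of the (possibly empty) factor $b=w_{x+1}\cdots w_{c_k}$ is larger than $w_{i_k}$ (if $k\ge 1$), and for each $1\le j\le k$ every letter of the (possibly empty) factor $b_j=w_{c_j+1}\cdots w_{c_{j-1}}$ is smaller than $w_{i_j}$ and, if $j\ge2$, larger than $w_{i_{j-1}}$. Thus $w_{x+1}\cdots w_n=b\,b_k\,b_{k-1}\cdots b_1$.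
   Context: A word $w$ of distinct positive integers contains a pattern $P=p_1\cdots p_m$ (a permutation of $[m]$) if some subsequence $w_{i_1}\cdots w_{i_m}$ with $i_1<\dots<i_m$ is order-isomorphic to $P$; otherwise it avoids $P$. $\mathrm{Lrmax}(w)$ is the set of letters $w_i$ with $w_i>w_j$ for all $j<i$. *)

theory Defs
  imports Main
begin

(* Words are lists of naturals, indexed from 0 (so w ! 0 is the letter w_1 of the paper). *)

definition order_iso :: "nat list \<Rightarrow> nat list \<Rightarrow> bool" where
  "order_iso u v \<longleftrightarrow> length u = length v \<and>
     (\<forall>i < length u. \<forall>j < length u. (u ! i < u ! j \<longleftrightarrow> v ! i < v ! j))"

definition contains_pattern :: "nat list \<Rightarrow> nat list \<Rightarrow> bool" where
  "contains_pattern w P \<longleftrightarrow>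
     (\<exists>is. length is = length P \<and> sorted_wrt (<) is \<and> (\<forall>i\<in>set is. i < length w)
           \<and> order_iso (map (\<lambda>i. w ! i) is) P)"

definition avoids :: "nat list \<Rightarrow> nat list \<Rightarrow> bool" where
  "avoids w P \<longleftrightarrow> \<not> contains_pattern w P"

definition Lrmax :: "nat list \<Rightarrow> nat set" where
  "Lrmax w = {w ! i | i. i < length w \<and> (\<forall>j < i. w ! j < w ! i)}"

end

theory Submission
  imports Defs
begin

lemma all4: "(\<forall>i<(4::nat). P i) \<longleftrightarrow> P 0 \<and> P 1 \<and> P 2 \<and> P 3"
  by (auto simp: less_Suc_eq numeral_eq_Suc)

lemma pat3124:
  assumes "a < b" "b < c" "c < d" "d < length w" "w!b < w!c" "w!c < w!a" "w!a < w!d"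
  shows "contains_pattern w [3,1,2,4]"
  unfolding contains_pattern_def
  apply (rule exI[of _ "[a,b,c,d]"])
  using assms by (simp add: order_iso_def All_less_Suc)

lemma pat3214:
  assumes "a < b" "b < c" "c < d" "d < length w" "w!c < w!b" "w!b < w!a" "w!a < w!d"
  shows "contains_pattern w [3,2,1,4]"
  unfolding contains_pattern_def
  apply (rule exI[of _ "[a,b,c,d]"])
  using assms by (simp add: order_iso_def All_less_Suc)

theorem proposition2p2:
  fixes w :: "nat list" and x :: nat and ds :: "nat list"
  assumes "w \<noteq> []" and "distinct w" and "\<forall>a\<in>set w. 0 < a"
    and "avoids w [3,1,2,4]" and "avoids w [3,2,1,4]"
    and "x < length w" and "w ! x = Max (set w)"
    and "ds = filter (\<lambda>i. w ! Suc i < w ! i) [0..<x]"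
  shows "Lrmax w = {w ! j | j. j \<le> x \<and> j \<notin> Suc ` set ds}
         \<and> sorted_wrt (<) (map (\<lambda>i. w ! i) ds @ [w ! x])
         \<and> (\<exists>c :: nat \<Rightarrow> nat.
              c 0 = length w
            \<and> (\<forall>j < length ds. c (Suc j) \<le> c j)
            \<and> Suc x \<le> c (length ds)
            \<and> (\<forall>p. Suc x \<le> p \<and> p < c (length ds) \<and> 1 \<le> length ds
                    \<longrightarrow> w ! (ds ! (length ds - 1)) < w ! p)
            \<and> (\<forall>j. 1 \<le> j \<and> j \<le> length ds \<longrightarrow>
                 (\<forall>p. c j \<le> p \<and> p < c (j - 1) \<longrightarrow>
                    w ! p < w ! (ds ! (j - 1))
                    \<and> (2 \<le> j \<longrightarrow> w ! (ds ! (j - 2)) < w ! p))))"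
proof -
  define n where "n = length w"
  define k where "k = length ds"
  have xn: "x < n" using assms(6) n_def by simp
  have dist: "\<And>a b. a < n \<Longrightarrow> b < n \<Longrightarrow> a \<noteq> b \<Longrightarrow> w!a \<noteq> w!b"
    using assms(2) n_def by (simp add: nth_eq_iff_index_eq)
  have maxx: "\<And>a. a < n \<Longrightarrow> a \<noteq> x \<Longrightarrow> w!a < w!x"
  proof -
    fix a assume a: "a < n" "a \<noteq> x"
    have "w!a \<le> w!x" using assms(7) a n_def by simp
    with dist[OF a(1) xn a(2)] show "w!a < w!x" by simp
  qed
  have no1: "\<And>a b c d. a < b \<Longrightarrow> b < c \<Longrightarrow> c < d \<Longrightarrow> d < n \<Longrightarrow> w!b < w!c \<Longrightarrow> w!c < w!a \<Longrightarrow> w!a < w!d \<Longrightarrow> False"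
    using pat3124 assms(4) n_def unfolding avoids_def by blast
  have no2: "\<And>a b c d. a < b \<Longrightarrow> b < c \<Longrightarrow> c < d \<Longrightarrow> d < n \<Longrightarrow> w!c < w!b \<Longrightarrow> w!b < w!a \<Longrightarrow> w!a < w!d \<Longrightarrow> False"
    using pat3214 assms(5) n_def unfolding avoids_def by blast
  have setds: "set ds = {i. i < x \<and> w ! Suc i < w ! i}" using assms(8) by auto
  have dslr: "\<And>i a. i \<in> set ds \<Longrightarrow> a < i \<Longrightarrow> w!a < w!i"
  proof -
    fix i a assume i: "i \<in> set ds" and a: "a < i"
    have ix: "i < x" and d: "w ! Suc i < w ! i" using i setds by auto
    have "Suc i \<noteq> x"
    proof
      assume "Suc i = x"
      have "w!i < w!x" using maxx ix xn by simp
      with d \<open>Suc i = x\<close> show False by simp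
    qed
    hence six: "Suc i < x" using ix by simp
    show "w!a < w!i"
    proof (rule ccontr)
      assume "\<not> w!a < w!i"
      moreover have "w!a \<noteq> w!i" using dist[of a i] a ix xn by simp
      ultimately have "w!i < w!a" by simp
      moreover have "w!a < w!x" using maxx[of a] a ix xn by simp
      ultimately show False using no2[of a i "Suc i" x] a six xn d by simp
    qed
  qed
  have sds: "sorted_wrt (<) ds" unfolding assms(8)
    by (rule sorted_wrt_filter) (simp add: sorted_wrt_upt)
  have S: "\<And>m m'. m < m' \<Longrightarrow> m' < k \<Longrightarrow> w!(ds!m) < w!(ds!m')"
  proof -
    fix m m' assume "m < m'" "m' < k"
    hence "ds!m < ds!m'" using sds k_def sorted_wrt_nth_less by blast
    thus "w!(ds!m) < w!(ds!m')" using dslr \<open>m' < k\<close> k_def by simp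
  qed
  have dsx: "\<And>m. m < k \<Longrightarrow> ds!m < x \<and> w!(Suc (ds!m)) < w!(ds!m)"
    using setds k_def nth_mem by blast
  have P1: "Lrmax w = {w ! j | j. j \<le> x \<and> j \<notin> Suc ` set ds}"
  proof
    show "Lrmax w \<subseteq> {w ! j | j. j \<le> x \<and> j \<notin> Suc ` set ds}"
    proof
      fix y assume "y \<in> Lrmax w"
      then obtain i where i: "i < n" "\<forall>j<i. w!j < w!i" "y = w!i"
        unfolding Lrmax_def n_def by blast
      have "i \<le> x"
      proof (rule ccontr)
        assume "\<not> i \<le> x"
        hence "w!x < w!i" using i by simp
        moreover have "w!i < w!x" using maxx i \<open>\<not> i \<le> x\<close> by simp
        ultimately show False by simp
      qed
      moreover have "i \<notin> Suc ` set ds"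
      proof
        assume "i \<in> Suc ` set ds"
        then obtain m where "m \<in> set ds" "i = Suc m" by blast
        thus False using i setds by auto
      qed
      ultimately show "y \<in> {w ! j | j. j \<le> x \<and> j \<notin> Suc ` set ds}" using i by blast
    qed
  next
    show "{w ! j | j. j \<le> x \<and> j \<notin> Suc ` set ds} \<subseteq> Lrmax w"
    proof
      fix y assume "y \<in> {w ! j | j. j \<le> x \<and> j \<notin> Suc ` set ds}"
      then obtain j where j: "j \<le> x" "j \<notin> Suc ` set ds" "y = w!j" by blast
      have "\<forall>a<j. w!a < w!j"
      proof (intro allI impI)
        fix a assume a: "a < j"
        show "w!a < w!j"
        proof (cases "j = x")
          case True thus ?thesis using maxx a j xn by simp
        next
          case False
          hence jx: "j < x" using j by simp
          obtain m where m: "j = Suc m" using a by (cases j) auto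
          have "m \<notin> set ds" using j m by blast
          hence "\<not> w!j < w!m" using setds m jx by simp
          moreover have "w!j \<noteq> w!m" using dist[of j m] m jx xn by simp
          ultimately have wm: "w!m < w!j" by simp
          show ?thesis
          proof (rule ccontr)
            assume "\<not> w!a < w!j"
            moreover have "w!a \<noteq> w!j" using dist[of a j] a jx xn by simp
            ultimately have aj: "w!j < w!a" by simp
            hence "a \<noteq> m" using wm by auto
            hence "a < m" using a m by simp
            moreover have "w!a < w!x" using maxx[of a] a jx xn by simp
            ultimately show False using no1[of a m j x] m jx xn wm aj by simp
          qed
        qed
      qed
      thus "y \<in> Lrmax w" unfolding Lrmax_def using j xn n_def by auto
    qed
  qed
  have P2: "sorted_wrt (<) (map (\<lambda>i. w ! i) ds @ [w ! x])"
  proof -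
    have "sorted_wrt (<) (map (\<lambda>i. w ! i) ds)"
      unfolding sorted_wrt_iff_nth_less using S k_def by simp
    moreover have "\<forall>y\<in>set ds. w!y < w!x" using setds maxx xn by auto
    ultimately show ?thesis by (auto simp: sorted_wrt_append)
  qed
  define above where "above j y \<longleftrightarrow> j = 0 \<or> (j \<le> k \<and> w!(ds!(j-1)) < y)" for j y
  have N: "\<And>j p q. x < p \<Longrightarrow> p < q \<Longrightarrow> q < n \<Longrightarrow> above j (w!q) \<Longrightarrow> above j (w!p)"
  proof -
    fix j p q assume pq: "x < p" "p < q" "q < n" and ab: "above j (w!q)"
    show "above j (w!p)"
    proof (cases "j = 0")
      case True thus ?thesis by (simp add: above_def)
    next
      case False
      hence jk: "j \<le> k" and lt: "w!(ds!(j-1)) < w!q" using ab above_def by auto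
      define i where "i = ds!(j-1)"
      have i: "i < x" "w!(Suc i) < w!i" using dsx[of "j-1"] jk False i_def by auto
      show ?thesis
      proof (rule ccontr)
        assume "\<not> above j (w!p)"
        hence "\<not> w!i < w!p" using jk False above_def i_def by simp
        moreover have "w!i \<noteq> w!p" using dist[of i p] i pq by simp
        ultimately have pi: "w!p < w!i" by simp
        have iq: "w!i < w!q" using lt i_def by simp
        have "Suc i < p" using i pq by simp
        show False
        proof (cases "w!(Suc i) < w!p")
          case True
          thus False using no1[of i "Suc i" p q] \<open>Suc i < p\<close> pq pi iq by simp
        next
          case False
          moreover have "w!(Suc i) \<noteq> w!p" using dist[of "Suc i" p] \<open>Suc i < p\<close> pq by simp
          ultimately have "w!p < w!(Suc i)" by simp
          thus False using no2[of i "Suc i" p q] \<open>Suc i < p\<close> pq i iq by simp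
        qed
      qed
    qed
  qed
  define Q where "Q j p \<longleftrightarrow> Suc x \<le> p \<and> (\<forall>q. p \<le> q \<and> q < n \<longrightarrow> \<not> above j (w!q))" for j p
  define c where "c j = (LEAST p. Q j p)" for j
  have Qn: "\<And>j. Q j n" using xn Q_def by auto
  have cQ: "\<And>j. Q j (c j)" unfolding c_def using Qn by (rule LeastI)
  have cn: "\<And>j. c j \<le> n" unfolding c_def using Qn by (rule Least_le)
  have c0: "c 0 = n"
  proof -
    have "\<not> c 0 < n"
    proof
      assume "c 0 < n"
      thus False using cQ[of 0] Q_def above_def by auto
    qed
    thus ?thesis using cn[of 0] by simp
  qed
  have cmono: "\<And>j. j < k \<Longrightarrow> c (Suc j) \<le> c j"
  proof -
    fix j assume "j < k"
    have "Q (Suc j) (c j)"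
      unfolding Q_def
    proof (intro conjI allI impI)
      show "Suc x \<le> c j" using cQ Q_def by blast
    next
      fix q assume q: "c j \<le> q \<and> q < n"
      hence na: "\<not> above j (w!q)" using cQ[of j] Q_def by blast
      show "\<not> above (Suc j) (w!q)"
      proof
        assume "above (Suc j) (w!q)"
        hence "w!(ds!j) < w!q" "Suc j \<le> k" using above_def by auto
        moreover have "j = 0 \<or> w!(ds!(j-1)) < w!(ds!j)"
        proof (cases j)
          case (Suc m) thus ?thesis using S[of m j] \<open>j<k\<close> by simp
        qed simp
        ultimately have "above j (w!q)" using above_def by auto
        with na show False by simp
      qed
    qed
    thus "c (Suc j) \<le> c j" unfolding c_def by (rule Least_le)
  qed
  have below: "\<And>j p. Suc x \<le> p \<Longrightarrow> p < c j \<Longrightarrow> above j (w!p)"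
  proof -
    fix j p assume p: "Suc x \<le> p" "p < c j"
    have "\<not> Q j p" using p(2) unfolding c_def by (rule not_less_Least)
    then obtain q where q: "p \<le> q" "q < n" "above j (w!q)" using p Q_def by auto
    show "above j (w!p)"
    proof (cases "p = q")
      case True thus ?thesis using q by simp
    next
      case False thus ?thesis using N[of p q j] q p by simp
    qed
  qed
  have P3: "c 0 = length w
            \<and> (\<forall>j < length ds. c (Suc j) \<le> c j)
            \<and> Suc x \<le> c (length ds)
            \<and> (\<forall>p. Suc x \<le> p \<and> p < c (length ds) \<and> 1 \<le> length ds
                    \<longrightarrow> w ! (ds ! (length ds - 1)) < w ! p)
            \<and> (\<forall>j. 1 \<le> j \<and> j \<le> length ds \<longrightarrow>
                 (\<forall>p. c j \<le> p \<and> p < c (j - 1) \<longrightarrow>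
                    w ! p < w ! (ds ! (j - 1))
                    \<and> (2 \<le> j \<longrightarrow> w ! (ds ! (j - 2)) < w ! p)))"
  proof (intro conjI allI impI)
    show "c 0 = length w" using c0 n_def by simp
  next
    fix j assume "j < length ds" thus "c (Suc j) \<le> c j" using cmono k_def by simp
  next
    show "Suc x \<le> c (length ds)" using cQ Q_def by blast
  next
    fix p assume p: "Suc x \<le> p \<and> p < c (length ds) \<and> 1 \<le> length ds"
    hence "above k (w!p)" using below k_def by simp
    thus "w ! (ds ! (length ds - 1)) < w ! p" using p above_def k_def by auto
  next
    fix j p assume j: "1 \<le> j \<and> j \<le> length ds" and p: "c j \<le> p \<and> p < c (j - 1)"
    have pn: "p < n" using p cn[of "j-1"] by simp
    have "\<not> above j (w!p)" using cQ[of j] Q_def p pn by blast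
    hence "\<not> w!(ds!(j-1)) < w!p" using j above_def k_def by simp
    moreover have "ds!(j-1) < x" proof -
      have "j - 1 < k" using j k_def by linarith
      thus ?thesis using dsx by blast
    qed
    moreover have "Suc x \<le> p" using cQ[of j] Q_def p by simp
    ultimately have pd: "p \<noteq> ds!(j-1)" and dn: "ds!(j-1) < n" using xn by auto
    have "w!p \<noteq> w!(ds!(j-1))" using dist[OF pn dn pd] .
    with \<open>\<not> w!(ds!(j-1)) < w!p\<close> show "w ! p < w ! (ds ! (j - 1))" by simp
  next
    fix j p assume j: "1 \<le> j \<and> j \<le> length ds" and p: "c j \<le> p \<and> p < c (j - 1)" and "2 \<le> j"
    have "Suc x \<le> p" using cQ[of j] Q_def p by simp
    hence "above (j-1) (w!p)" using below p by simp
    moreover have "j - 1 \<noteq> 0" "j - 1 - 1 = j - 2" using \<open>2 \<le> j\<close> by arith+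
    ultimately show "w ! (ds ! (j - 2)) < w ! p" unfolding above_def by metis
  qed
  show ?thesis using P1 P2 P3 by blast
qed

end
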